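(* Let $r\ge2$ and let $\mathcal{P}$ be a set of $m\ge2$ non-collectable $r$-patterns. Then every $\mathcal P$-clique has size smaller than the multicolor Ramsey number $R_m(3)$. In particular, if $m=2$, every $\mathcal P$-clique has at most $5$ edges.
   Context: An ordered $r$-matching is a set of pairwise disjoint $r$-element subsets (edges) of a linearly ordered vertex set covering it. An $r$-pattern is an ordered $r$-matching of size 2, written as a word over $\{A,B\}$ (each letter $r$ times, starting with $A$). Two edges form pattern $P$ if they induce a matching order-isomorphic to $P$; a $\mathcal P$-clique is an ordered matching all of whose pairs of edges form patterns in $\mathcal P$. An $r$-pattern is collectable if it can be split into consecutive blocks each of the form $A^tB^t$ or $B^tA^t$ ($t\ge1$); otherwise it is non-collectable. $R_m(3)$ is the least $N$ such that every coloring of the edges of the complete graph $K_N$ with $m$ colors contains a monochromatic triangle. *)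

theory Defs
  imports Main
begin

datatype letter = A | B

definition is_pattern :: "nat \<Rightarrow> letter list \<Rightarrow> bool" where
  "is_pattern r w \<longleftrightarrow> length w = 2 * r \<and> count_list w A = r \<and> count_list w B = r
     \<and> w \<noteq> [] \<and> hd w = A"

definition is_block :: "letter list \<Rightarrow> bool" where
  "is_block b \<longleftrightarrow> (\<exists>t\<ge>1. b = replicate t A @ replicate t B \<or> b = replicate t B @ replicate t A)"

definition collectable :: "letter list \<Rightarrow> bool" where
  "collectable w \<longleftrightarrow> (\<exists>bs. concat bs = w \<and> (\<forall>b\<in>set bs. is_block b))"

text \<open>Ordered r-matching on a linearly ordered vertex set (the vertex set is the union of the edges).\<close>
definition ordered_matching :: "nat \<Rightarrow> 'a::linorder set set \<Rightarrow> bool" where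
  "ordered_matching r M \<longleftrightarrow> finite M \<and> (\<forall>e\<in>M. finite e \<and> card e = r)
     \<and> (\<forall>e\<in>M. \<forall>f\<in>M. e \<noteq> f \<longrightarrow> e \<inter> f = {})"

definition pattern_of :: "'a::linorder set \<Rightarrow> 'a set \<Rightarrow> letter list" where
  "pattern_of e f = (let g = (if Min e < Min f then e else f) in
     map (\<lambda>x. if x \<in> g then A else B) (sorted_list_of_set (e \<union> f)))"

definition P_clique :: "nat \<Rightarrow> letter list set \<Rightarrow> 'a::linorder set set \<Rightarrow> bool" where
  "P_clique r P M \<longleftrightarrow> ordered_matching r M \<and>
     (\<forall>e\<in>M. \<forall>f\<in>M. e \<noteq> f \<longrightarrow> pattern_of e f \<in> P)"

definition arrows_triangle :: "nat \<Rightarrow> nat \<Rightarrow> bool" where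
  "arrows_triangle m N \<longleftrightarrow> (\<forall>c :: nat \<Rightarrow> nat \<Rightarrow> nat.
      (\<forall>i j. i < j \<and> j < N \<longrightarrow> c i j < m) \<longrightarrow>
      (\<exists>i j k. i < j \<and> j < k \<and> k < N \<and> c i j = c j k \<and> c i j = c i k))"

definition multicolor_ramsey3 :: "nat \<Rightarrow> nat" where
  "multicolor_ramsey3 m = (LEAST N. arrows_triangle m N)"

end

theory Submission imports Defs begin

datatype tri = T0 | T1 | T2

fun p01 :: "tri list \<Rightarrow> letter list" where
  "p01 [] = []" | "p01 (T0 # w) = A # p01 w" | "p01 (T1 # w) = B # p01 w" | "p01 (T2 # w) = p01 w"
fun p12 :: "tri list \<Rightarrow> letter list" where
  "p12 [] = []" | "p12 (T0 # w) = p12 w" | "p12 (T1 # w) = A # p12 w" | "p12 (T2 # w) = B # p12 w"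
fun p02 :: "tri list \<Rightarrow> letter list" where
  "p02 [] = []" | "p02 (T0 # w) = A # p02 w" | "p02 (T1 # w) = p02 w" | "p02 (T2 # w) = B # p02 w"

lemma p01_app[simp]: "p01 (u @ v) = p01 u @ p01 v" by (induction u rule: p01.induct) auto
lemma p12_app[simp]: "p12 (u @ v) = p12 u @ p12 v" by (induction u rule: p12.induct) auto
lemma p02_app[simp]: "p02 (u @ v) = p02 u @ p02 v" by (induction u rule: p02.induct) auto

lemma p_rep[simp]:
  "p01 (replicate k T0) = replicate k A" "p01 (replicate k T1) = replicate k B" "p01 (replicate k T2) = []"
  "p12 (replicate k T0) = []" "p12 (replicate k T1) = replicate k A" "p12 (replicate k T2) = replicate k B"
  "p02 (replicate k T0) = replicate k A" "p02 (replicate k T1) = []" "p02 (replicate k T2) = replicate k B"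
  by (induction k) auto

lemma peel0: "p01 u = replicate k A @ a \<Longrightarrow> p02 u = replicate k A @ b \<Longrightarrow> \<exists>u'. u = replicate k T0 @ u'"
proof (induction k arbitrary: u)
  case (Suc k)
  then obtain x u'' where u: "u = x # u''" by (cases u) auto
  show ?case using Suc u by (cases x) (auto dest!: Suc.IH)
qed auto

lemma peel1: "p01 u = replicate k B @ a \<Longrightarrow> p12 u = replicate k A @ b \<Longrightarrow> \<exists>u'. u = replicate k T1 @ u'"
proof (induction k arbitrary: u)
  case (Suc k)
  then obtain x u'' where u: "u = x # u''" by (cases u) auto
  show ?case using Suc u by (cases x) (auto dest!: Suc.IH)
qed auto

lemma peel2: "p12 u = replicate k B @ a \<Longrightarrow> p02 u = replicate k B @ b \<Longrightarrow> \<exists>u'. u = replicate k T2 @ u'"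
proof (induction k arbitrary: u)
  case (Suc k)
  then obtain x u'' where u: "u = x # u''" by (cases u) auto
  show ?case using Suc u by (cases x) (auto dest!: Suc.IH)
qed auto

lemma runs: "\<exists>t rest. Q = replicate t a @ rest \<and> (rest = [] \<or> hd rest \<noteq> a)"
proof (induction Q)
  case Nil then show ?case by auto
next
  case (Cons x Q)
  then obtain t rest where "Q = replicate t a @ rest" "rest = [] \<or> hd rest \<noteq> a" by auto
  then show ?case
    by (cases "x = a") (metis append_Cons replicate_Suc, metis append_Nil list.sel(1) replicate_0)
qed

lemma coll_cons: "collectable R \<Longrightarrow> is_block b \<Longrightarrow> collectable (b @ R)"
  unfolding collectable_def by (metis concat.simps(2) set_ConsD)

lemma block_AB: "t \<ge> 1 \<Longrightarrow> is_block (replicate t A @ replicate t B)"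
  unfolding is_block_def by blast
lemma block_BA: "t \<ge> 1 \<Longrightarrow> is_block (replicate t B @ replicate t A)"
  unfolding is_block_def by blast

lemma hdB: "rest = [] \<or> hd rest \<noteq> A \<Longrightarrow> rest = [] \<or> (\<exists>r. rest = B # r)"
  by (cases rest; cases "hd rest") auto
lemma hdA: "rest = [] \<or> hd rest \<noteq> B \<Longrightarrow> rest = [] \<or> (\<exists>r. rest = A # r)"
  by (cases rest; cases "hd rest") auto

lemma word_coll: "p01 W = Q \<Longrightarrow> p12 W = Q \<Longrightarrow> p02 W = Q \<Longrightarrow> collectable Q"
proof (induction "length W" arbitrary: W Q rule: less_induct)
  case less
  show ?case
  proof (cases Q)
    case Nil
    then show ?thesis unfolding collectable_def by (intro exI[of _ "[]"]) auto
  next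
    case (Cons q Q0)
    show ?thesis
    proof (cases q)
      case A
      obtain t Q1 where tQ: "Q = replicate t A @ Q1" "Q1 = [] \<or> hd Q1 \<noteq> A" using runs[of Q A] by (elim exE conjE) (rule that)
      have t1: "t \<ge> 1" using tQ Cons A by (cases t) auto
      obtain s Q2 where sQ: "Q1 = replicate s B @ Q2" "Q2 = [] \<or> hd Q2 \<noteq> B" using runs[of Q1 B] by (elim exE conjE) (rule that)
      have s0: "s = 0 \<Longrightarrow> Q2 = []" using tQ(2) sQ by (cases Q2; cases "hd Q2") auto
      obtain W' where W': "W = replicate t T0 @ W'"
        using peel0[of W t Q1 Q1] less.prems tQ by auto
      have W'p: "p01 W' = Q1" "p12 W' = replicate t A @ Q1" "p02 W' = Q1"
        using less.prems W' tQ by auto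
      show ?thesis
      proof (cases "s \<ge> t")
        case True
        define R where "R = replicate (s - t) B @ Q2"
        have "replicate s B = replicate t B @ replicate (s - t) B" using True
          by (metis le_add_diff_inverse replicate_add)
        then have Q1R: "Q1 = replicate t B @ R" using sQ R_def by simp
        obtain W'' where W'': "W' = replicate t T1 @ W''"
          using peel1[of W' t R Q1] W'p Q1R by auto
        have W''p: "p01 W'' = R" "p12 W'' = replicate t B @ R" "p02 W'' = replicate t B @ R"
          using W'p W'' Q1R by auto
        obtain W3 where W3: "W'' = replicate t T2 @ W3"
          using peel2[of W'' t R R] W''p by auto
        have "p01 W3 = R" "p12 W3 = R" "p02 W3 = R" using W''p W3 by auto
        moreover have "length W3 < length W" using W' W'' W3 t1 by simp
        ultimately have "collectable R" using less.hyps[of W3 R] by simp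
        then have "collectable ((replicate t A @ replicate t B) @ R)"
          using coll_cons block_AB t1 by blast
        then show ?thesis using tQ Q1R by simp
      next
        case False
        define d where "d = t - s"
        have d: "t = s + d" "d \<ge> 1" using False d_def by auto
        have "\<exists>u'. W' = replicate s T1 @ u'"
          by (rule peel1[of W' s Q2 "replicate d A @ Q1"]) (use W'p sQ d in \<open>auto simp: replicate_add\<close>)
        then obtain W'' where W'': "W' = replicate s T1 @ W''" by blast
        have W''p: "p01 W'' = Q2" "p12 W'' = replicate d A @ Q1" "p02 W'' = replicate s B @ Q2"
          using W'p W'' sQ d by (auto simp: replicate_add)
        show ?thesis
        proof (cases W'')
          case Nil then show ?thesis using W''p d by (cases d) auto
        next
          case (Cons x W4)
          show ?thesis
          proof (cases x)
            case T0
            then have "Q2 \<noteq> []" using W''p Cons by auto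
            then have "s \<ge> 1" using s0 by (cases s) auto
            then show ?thesis using W''p Cons T0 by (cases s) auto
          next
            case T1 then show ?thesis using W''p Cons sQ(2) by auto
          next
            case T2 then show ?thesis using W''p Cons d by (cases d) auto
          qed
        qed
      qed
    next
      case B
      obtain t Q1 where tQ: "Q = replicate t B @ Q1" "Q1 = [] \<or> hd Q1 \<noteq> B" using runs[of Q B] by (elim exE conjE) (rule that)
      have t1: "t \<ge> 1" using tQ Cons B by (cases t) auto
      obtain s Q2 where sQ: "Q1 = replicate s A @ Q2" "Q2 = [] \<or> hd Q2 \<noteq> A" using runs[of Q1 A] by (elim exE conjE) (rule that)
      have s0: "s = 0 \<Longrightarrow> Q2 = []" using tQ(2) sQ by (cases Q2; cases "hd Q2") auto
      obtain W' where W': "W = replicate t T2 @ W'"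
        using peel2[of W t Q1 Q1] less.prems tQ by auto
      have W'p: "p01 W' = replicate t B @ Q1" "p12 W' = Q1" "p02 W' = Q1"
        using less.prems W' tQ by auto
      show ?thesis
      proof (cases "s \<ge> t")
        case True
        define R where "R = replicate (s - t) A @ Q2"
        have "replicate s A = replicate t A @ replicate (s - t) A" using True
          by (metis le_add_diff_inverse replicate_add)
        then have Q1R: "Q1 = replicate t A @ R" using sQ R_def by simp
        obtain W'' where W'': "W' = replicate t T1 @ W''"
          using peel1[of W' t Q1 R] W'p Q1R by auto
        have W''p: "p01 W'' = replicate t A @ R" "p12 W'' = R" "p02 W'' = replicate t A @ R"
          using W'p W'' Q1R by auto
        obtain W3 where W3: "W'' = replicate t T0 @ W3"
          using peel0[of W'' t R R] W''p by auto
        have "p01 W3 = R" "p12 W3 = R" "p02 W3 = R" using W''p W3 by auto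
        moreover have "length W3 < length W" using W' W'' W3 t1 by simp
        ultimately have "collectable R" using less.hyps[of W3 R] by simp
        then have "collectable ((replicate t B @ replicate t A) @ R)"
          using coll_cons block_BA t1 by blast
        then show ?thesis using tQ Q1R by simp
      next
        case False
        define d where "d = t - s"
        have d: "t = s + d" "d \<ge> 1" using False d_def by auto
        have "\<exists>u'. W' = replicate s T1 @ u'"
          by (rule peel1[of W' s "replicate d B @ Q1" Q2]) (use W'p sQ d in \<open>auto simp: replicate_add\<close>)
        then obtain W'' where W'': "W' = replicate s T1 @ W''" by blast
        have W''p: "p01 W'' = replicate d B @ Q1" "p12 W'' = Q2" "p02 W'' = replicate s A @ Q2"
          using W'p W'' sQ d by (auto simp: replicate_add)
        show ?thesis
        proof (cases W'')
          case Nil then show ?thesis using W''p d by (cases d) auto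
        next
          case (Cons x W4)
          show ?thesis
          proof (cases x)
            case T0 then show ?thesis using W''p Cons d by (cases d) auto
          next
            case T1 then show ?thesis using W''p Cons sQ(2) by auto
          next
            case T2
            show ?thesis
            proof (cases s)
              case 0 then show ?thesis using s0 W''p Cons T2 by auto
            next
              case (Suc s') then show ?thesis using W''p Cons T2 by auto
            qed
          qed
        qed
      qed
    qed
  qed
qed


lemma filter_sorted:
  assumes "finite S"
  shows "filter P (sorted_list_of_set S) = sorted_list_of_set {x\<in>S. P x}"
proof -
  let ?l = "filter P (sorted_list_of_set S)"
  have "sorted_wrt (<) ?l" by (simp add: sorted_wrt_filter)
  moreover have "set ?l = {x\<in>S. P x}" using assms by auto
  moreover have "length ?l = card {x\<in>S. P x}"
    using assms by (metis calculation(2) distinct_card distinct_filter distinct_sorted_list_of_set)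
  ultimately have "sorted_list_of_set {x\<in>S. P x} = ?l"
    using assms sorted_list_of_set_unique[of "{x\<in>S. P x}" ?l] by auto
  then show ?thesis by simp
qed

definition lab :: "'a set \<Rightarrow> 'a set \<Rightarrow> 'a \<Rightarrow> tri" where
  "lab X Y v = (if v \<in> X then T0 else if v \<in> Y then T1 else T2)"

definition opat :: "'a::linorder set \<Rightarrow> 'a set \<Rightarrow> letter list" where
  "opat X Y = map (\<lambda>v. if v \<in> X then A else B) (sorted_list_of_set (X \<union> Y))"

lemma p01_alt: "p01 W = map (\<lambda>l. if l = T0 then A else B) (filter (\<lambda>l. l \<noteq> T2) W)"
  by (induction W rule: p01.induct) auto
lemma p12_alt: "p12 W = map (\<lambda>l. if l = T1 then A else B) (filter (\<lambda>l. l \<noteq> T0) W)"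
  by (induction W rule: p12.induct) auto
lemma p02_alt: "p02 W = map (\<lambda>l. if l = T0 then A else B) (filter (\<lambda>l. l \<noteq> T1) W)"
  by (induction W rule: p02.induct) auto

lemma word_of_sets:
  fixes X Y Z :: "'a::linorder set"
  assumes fin: "finite X" "finite Y" "finite Z"
    and disj: "X \<inter> Y = {}" "Y \<inter> Z = {}" "X \<inter> Z = {}"
  defines "L \<equiv> sorted_list_of_set (X \<union> Y \<union> Z)"
  shows "p01 (map (lab X Y) L) = opat X Y" "p12 (map (lab X Y) L) = opat Y Z"
    "p02 (map (lab X Y) L) = opat X Z"
proof -
  have sL: "set L = X \<union> Y \<union> Z" using fin by (simp add: L_def)
  have fS: "finite (X \<union> Y \<union> Z)" using fin by simp
  have f01: "filter (\<lambda>v. lab X Y v \<noteq> T2) L = sorted_list_of_set (X \<union> Y)"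
  proof -
    have "filter (\<lambda>v. lab X Y v \<noteq> T2) L = filter (\<lambda>v. v \<in> X \<union> Y) L"
      by (rule filter_cong) (auto simp: lab_def)
    also have "\<dots> = sorted_list_of_set {v \<in> X \<union> Y \<union> Z. v \<in> X \<union> Y}"
      unfolding L_def by (rule filter_sorted[OF fS])
    also have "{v \<in> X \<union> Y \<union> Z. v \<in> X \<union> Y} = X \<union> Y" by auto
    finally show ?thesis .
  qed
  have f12: "filter (\<lambda>v. lab X Y v \<noteq> T0) L = sorted_list_of_set (Y \<union> Z)"
  proof -
    have "filter (\<lambda>v. lab X Y v \<noteq> T0) L = filter (\<lambda>v. v \<in> Y \<union> Z) L"
      by (rule filter_cong) (use sL disj in \<open>auto simp: lab_def\<close>)
    also have "\<dots> = sorted_list_of_set {v \<in> X \<union> Y \<union> Z. v \<in> Y \<union> Z}"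
      unfolding L_def by (rule filter_sorted[OF fS])
    also have "{v \<in> X \<union> Y \<union> Z. v \<in> Y \<union> Z} = Y \<union> Z" by auto
    finally show ?thesis .
  qed
  have f02: "filter (\<lambda>v. lab X Y v \<noteq> T1) L = sorted_list_of_set (X \<union> Z)"
  proof -
    have "filter (\<lambda>v. lab X Y v \<noteq> T1) L = filter (\<lambda>v. v \<in> X \<union> Z) L"
      by (rule filter_cong) (use sL disj in \<open>auto simp: lab_def\<close>)
    also have "\<dots> = sorted_list_of_set {v \<in> X \<union> Y \<union> Z. v \<in> X \<union> Z}"
      unfolding L_def by (rule filter_sorted[OF fS])
    also have "{v \<in> X \<union> Y \<union> Z. v \<in> X \<union> Z} = X \<union> Z" by auto
    finally show ?thesis .
  qed
  show "p01 (map (lab X Y) L) = opat X Y"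
    unfolding p01_alt filter_map o_def f01[unfolded o_def] opat_def map_map
    by (rule map_cong) (auto simp: lab_def)
  show "p12 (map (lab X Y) L) = opat Y Z"
    unfolding p12_alt filter_map o_def f12[unfolded o_def] opat_def map_map
    by (rule map_cong) (use fin disj in \<open>auto simp: lab_def\<close>)
  show "p02 (map (lab X Y) L) = opat X Z"
    unfolding p02_alt filter_map o_def f02[unfolded o_def] opat_def map_map
    by (rule map_cong) (use fin disj in \<open>auto simp: lab_def\<close>)
qed

lemma pattern_of_opat: "Min e < Min f \<Longrightarrow> pattern_of e f = opat e f"
  unfolding pattern_of_def opat_def Let_def by simp

lemma pattern_sym: "Min e \<noteq> Min (f::'a::linorder set) \<Longrightarrow> pattern_of e f = pattern_of f e"
  unfolding pattern_of_def Let_def by (auto simp: Un_commute)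

lemma three_ord:
  fixes X Y Z :: "'a::linorder set"
  assumes fin: "finite X" "finite Y" "finite Z"
    and disj: "X \<inter> Y = {}" "Y \<inter> Z = {}" "X \<inter> Z = {}"
    and o: "Min X < Min Y" "Min Y < Min Z"
    and p: "pattern_of X Y = w" "pattern_of Y Z = w" "pattern_of X Z = w"
  shows "collectable w"
proof -
  have "opat X Y = w" "opat Y Z = w" "opat X Z = w"
    using p o pattern_of_opat[of X Y] pattern_of_opat[of Y Z] pattern_of_opat[of X Z] by auto
  then show ?thesis using word_of_sets[OF fin disj] word_coll by metis
qed

lemma three:
  fixes a b c :: "'a::linorder set"
  assumes fin: "finite a" "finite b" "finite c"
    and ne: "a \<noteq> {}" "b \<noteq> {}" "c \<noteq> {}"
    and disj: "a \<inter> b = {}" "b \<inter> c = {}" "a \<inter> c = {}"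
    and p: "pattern_of a b = w" "pattern_of b c = w" "pattern_of a c = w"
  shows "collectable w"
proof -
  have m: "Min a \<in> a" "Min b \<in> b" "Min c \<in> c" using fin ne by auto
  have d: "Min a \<noteq> Min b" "Min b \<noteq> Min c" "Min a \<noteq> Min c" using m disj by auto
  have q: "pattern_of b a = w" "pattern_of c b = w" "pattern_of c a = w"
    using p d pattern_sym by metis+
  have disj': "b \<inter> a = {}" "c \<inter> b = {}" "c \<inter> a = {}" using disj by auto
  consider "Min a < Min b" "Min b < Min c" | "Min a < Min c" "Min c < Min b"
    | "Min b < Min a" "Min a < Min c" | "Min b < Min c" "Min c < Min a"
    | "Min c < Min a" "Min a < Min b" | "Min c < Min b" "Min b < Min a"
    using d by (meson linorder_neqE)
  then show ?thesis
  proof cases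
    case 1 then show ?thesis using three_ord[of a b c] fin disj disj' p q by blast
  next
    case 2 then show ?thesis using three_ord[of a c b] fin disj disj' p q by blast
  next
    case 3 then show ?thesis using three_ord[of b a c] fin disj disj' p q by blast
  next
    case 4 then show ?thesis using three_ord[of b c a] fin disj disj' p q by blast
  next
    case 5 then show ?thesis using three_ord[of c a b] fin disj disj' p q by blast
  next
    case 6 then show ?thesis using three_ord[of c b a] fin disj disj' p q by blast
  qed
qed

lemma arrows_mono: "arrows_triangle m N \<Longrightarrow> N \<le> N' \<Longrightarrow> arrows_triangle m N'"
  unfolding arrows_triangle_def
proof (intro allI impI)
  fix c :: "nat \<Rightarrow> nat \<Rightarrow> nat"
  assume H: "\<forall>c. (\<forall>i j. i < j \<and> j < N \<longrightarrow> c i j < m) \<longrightarrow>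
      (\<exists>i j k. i < j \<and> j < k \<and> k < N \<and> c i j = c j k \<and> c i j = c i k)"
    and le: "N \<le> N'" and col: "\<forall>i j. i < j \<and> j < N' \<longrightarrow> c i j < m"
  have "\<forall>i j. i < j \<and> j < N \<longrightarrow> c i j < m" using col le by auto
  then obtain i j k where "i < j \<and> j < k \<and> k < N \<and> c i j = c j k \<and> c i j = c i k"
    using H by blast
  then show "\<exists>i j k. i < j \<and> j < k \<and> k < N' \<and> c i j = c j k \<and> c i j = c i k"
    using le by (intro exI[of _ i] exI[of _ j] exI[of _ k]) auto
qed

lemma arrows_0: "arrows_triangle 0 2"
  unfolding arrows_triangle_def
proof (intro allI impI)
  fix c :: "nat \<Rightarrow> nat \<Rightarrow> nat"
  assume "\<forall>i j. i < j \<and> j < 2 \<longrightarrow> c i j < 0"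
  then have "0 < (1::nat) \<and> (1::nat) < 2 \<longrightarrow> c 0 1 < 0" by blast
  then have "c 0 1 < 0" by simp
  then show "\<exists>i j k. i < j \<and> j < k \<and> k < 2 \<and> c i j = c j k \<and> c i j = c i k" by simp
qed

lemma arrows_step:
  assumes IH: "arrows_triangle m N" and N1: "1 \<le> N"
  shows "arrows_triangle (Suc m) (Suc m * (N - 1) + 2)"
  unfolding arrows_triangle_def
proof (intro allI impI)
  fix c :: "nat \<Rightarrow> nat \<Rightarrow> nat"
  define N' where "N' = Suc m * (N - 1) + 2"
  assume col0: "\<forall>i j. i < j \<and> j < Suc m * (N - 1) + 2 \<longrightarrow> c i j < Suc m"
  then have col: "\<And>i j. i < j \<Longrightarrow> j < N' \<Longrightarrow> c i j < Suc m" unfolding N'_def by blast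
  define V where "V = {1..<N'}"
  define C where "C \<kappa> = {j \<in> V. c 0 j = \<kappa>}" for \<kappa>
  have V_un: "V = (\<Union>\<kappa><Suc m. C \<kappa>)"
  proof
    show "V \<subseteq> (\<Union>\<kappa><Suc m. C \<kappa>)"
    proof
      fix j assume "j \<in> V"
      then have "c 0 j < Suc m" "j \<in> V" using col[of 0 j] by (auto simp: V_def)
      then show "j \<in> (\<Union>\<kappa><Suc m. C \<kappa>)" by (auto simp: C_def)
    qed
  qed (auto simp: C_def)
  have cardV: "card V = Suc m * (N - 1) + 1" by (simp add: V_def N'_def)
  have "\<exists>\<kappa><Suc m. N \<le> card (C \<kappa>)"
  proof (rule ccontr)
    assume "\<not> ?thesis"
    then have le: "\<And>\<kappa>. \<kappa> \<in> {..<Suc m} \<Longrightarrow> card (C \<kappa>) \<le> N - 1" by force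
    have "card V \<le> (\<Sum>\<kappa><Suc m. card (C \<kappa>))" unfolding V_un by (rule card_UN_le) simp
    also have "\<dots> \<le> (\<Sum>\<kappa><Suc m. N - 1)" by (rule sum_mono) (rule le)
    also have "\<dots> = Suc m * (N - 1)" by simp
    finally show False using cardV by simp
  qed
  then obtain \<kappa> where \<kappa>: "\<kappa> < Suc m" "N \<le> card (C \<kappa>)" by blast
  have finC: "finite (C \<kappa>)" by (simp add: C_def V_def)
  define s where "s = sorted_list_of_set (C \<kappa>)"
  have len: "length s = card (C \<kappa>)" by (simp add: s_def)
  have srt: "sorted_wrt (<) s" by (simp add: s_def)
  define e where "e i = s ! i" for i
  have eC: "e i \<in> C \<kappa>" if "i < N" for i
    using that \<kappa> len finC nth_mem[of i s] by (auto simp: e_def s_def)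
  have eV: "1 \<le> e i" "e i < N'" "c 0 (e i) = \<kappa>" if "i < N" for i
    using eC[OF that] by (auto simp: C_def V_def)
  have emono: "e i < e j" if "i < j" "j < N" for i j
    using sorted_wrt_nth_less[OF srt that(1)] that \<kappa> len by (simp add: e_def)
  show "\<exists>i j k. i < j \<and> j < k \<and> k < Suc m * (N - 1) + 2 \<and> c i j = c j k \<and> c i j = c i k"
  proof (cases "\<exists>i j. i < j \<and> j < N \<and> c (e i) (e j) = \<kappa>")
    case True
    then obtain i j where ij: "i < j" "j < N" "c (e i) (e j) = \<kappa>" by blast
    have "0 < e i" using eV(1)[of i] ij by simp
    moreover have "e i < e j" using emono ij by simp
    moreover have "e j < N'" using eV(2) ij by simp
    moreover have "c 0 (e i) = \<kappa>" "c 0 (e j) = \<kappa>" using eV(3) ij by auto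
    ultimately show ?thesis using ij
      by (intro exI[of _ 0] exI[of _ "e i"] exI[of _ "e j"]) (auto simp: N'_def)
  next
    case False
    define c' where "c' i j = (if c (e i) (e j) > \<kappa> then c (e i) (e j) - 1 else c (e i) (e j))" for i j
    have "\<forall>i j. i < j \<and> j < N \<longrightarrow> c' i j < m"
    proof (intro allI impI)
      fix i j assume ij: "i < j \<and> j < N"
      then have "c (e i) (e j) < Suc m" using col emono eV(2) by auto
      moreover have "c (e i) (e j) \<noteq> \<kappa>" using False ij by auto
      ultimately show "c' i j < m" using \<kappa> by (auto simp: c'_def)
    qed
    then obtain i j k where ijk: "i < j" "j < k" "k < N" "c' i j = c' j k" "c' i j = c' i k"
      using IH unfolding arrows_triangle_def by blast
    have ne: "c (e i) (e j) \<noteq> \<kappa>" "c (e j) (e k) \<noteq> \<kappa>" "c (e i) (e k) \<noteq> \<kappa>"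
      using False ijk by auto
    have eq: "c (e i) (e j) = c (e j) (e k)" "c (e i) (e j) = c (e i) (e k)"
      using ijk(4,5) ne by (auto simp: c'_def split: if_splits)
    have "e i < e j" "e j < e k" "e k < N'" using emono eV(2) ijk by auto
    then show ?thesis using eq
      by (intro exI[of _ "e i"] exI[of _ "e j"] exI[of _ "e k"]) (auto simp: N'_def)
  qed
qed

lemma arrows_ex: "\<exists>N. arrows_triangle m N \<and> 1 \<le> N"
proof (induction m)
  case 0 then show ?case using arrows_0 by (intro exI[of _ 2]) auto
next
  case (Suc m)
  then obtain N where "arrows_triangle m N" "1 \<le> N" by blast
  then show ?case using arrows_step by (intro exI[of _ "Suc m * (N - 1) + 2"]) auto
qed

lemma arrows_2_6: "arrows_triangle 2 6"
proof -
  have "arrows_triangle (Suc 0) (Suc 0 * (2 - 1) + 2)" by (rule arrows_step[OF arrows_0]) simp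
  then have a3: "arrows_triangle 1 3" by (simp add: eval_nat_numeral)
  have "arrows_triangle (Suc 1) (Suc 1 * (3 - 1) + 2)" by (rule arrows_step[OF a3]) simp
  then show ?thesis by (simp add: eval_nat_numeral)
qed

theorem mainTheorem11:
  fixes r m :: nat and P :: "letter list set" and M :: "'a::linorder set set"
  assumes "r \<ge> 2" and "m \<ge> 2"
    and "finite P" and "card P = m"
    and "\<forall>w\<in>P. is_pattern r w \<and> \<not> collectable w"
    and "P_clique r P M"
  shows "card M < multicolor_ramsey3 m \<and> (m = 2 \<longrightarrow> card M \<le> 5)"
proof -
  have finM: "finite M" and edge: "\<And>e. e \<in> M \<Longrightarrow> finite e \<and> card e = r"
    and dsj: "\<And>e f. e \<in> M \<Longrightarrow> f \<in> M \<Longrightarrow> e \<noteq> f \<Longrightarrow> e \<inter> f = {}"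
    and pat: "\<And>e f. e \<in> M \<Longrightarrow> f \<in> M \<Longrightarrow> e \<noteq> f \<Longrightarrow> pattern_of e f \<in> P"
    using assms(6) unfolding P_clique_def ordered_matching_def by auto
  have ne: "e \<noteq> {}" if "e \<in> M" for e using edge[OF that] assms(1) by auto
  have na: "\<not> arrows_triangle m (card M)"
  proof
    assume arr: "arrows_triangle m (card M)"
    obtain g where g: "bij_betw g {0..<card M} M" using ex_bij_betw_nat_finite[OF finM] by blast
    obtain h where h: "bij_betw h P {0..<card P}" using ex_bij_betw_finite_nat[OF assms(3)] by blast
    define c where "c i j = h (pattern_of (g i) (g j))" for i j
    have gM: "g i \<in> M" if "i < card M" for i using g that by (auto simp: bij_betw_def)
    have ginj: "g i \<noteq> g j" if "i < card M" "j < card M" "i \<noteq> j" for i j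
      using g that by (auto simp: bij_betw_def inj_on_def)
    have "\<forall>i j. i < j \<and> j < card M \<longrightarrow> c i j < m"
    proof (intro allI impI)
      fix i j assume ij: "i < j \<and> j < card M"
      then have "pattern_of (g i) (g j) \<in> P" using pat gM ginj by auto
      then show "c i j < m" using h assms(4) by (auto simp: c_def bij_betw_def)
    qed
    then obtain i j k where ijk: "i < j" "j < k" "k < card M" "c i j = c j k" "c i j = c i k"
      using arr unfolding arrows_triangle_def by blast
    have inP: "pattern_of (g i) (g j) \<in> P" "pattern_of (g j) (g k) \<in> P" "pattern_of (g i) (g k) \<in> P"
      using pat gM ginj ijk by auto
    have hinj: "inj_on h P" using h by (auto simp: bij_betw_def)
    have eqs: "pattern_of (g j) (g k) = pattern_of (g i) (g j)"
      "pattern_of (g i) (g k) = pattern_of (g i) (g j)"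
      using inj_onD[OF hinj] inP ijk(4,5) unfolding c_def by metis+
    have "collectable (pattern_of (g i) (g j))"
      by (rule three[of "g i" "g j" "g k"])
        (use edge gM ne dsj ginj ijk eqs in auto)
    then show False using assms(5) inP by blast
  qed
  have R: "arrows_triangle m (multicolor_ramsey3 m)"
    unfolding multicolor_ramsey3_def by (rule LeastI_ex) (use arrows_ex in blast)
  have lt: "card M < multicolor_ramsey3 m"
  proof (rule ccontr)
    assume "\<not> ?thesis"
    then show False using arrows_mono[OF R] na by simp
  qed
  moreover have "m = 2 \<longrightarrow> card M \<le> 5"
  proof
    assume "m = 2"
    then have "multicolor_ramsey3 m \<le> 6"
      unfolding multicolor_ramsey3_def by (simp add: Least_le arrows_2_6)
    then show "card M \<le> 5" using lt by simp
  qed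
  ultimately show ?thesis by blast
qed

end
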